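(* Let $A \in\mathcal{L}_d(\mathcal{Q})$, $A \neq 0$, admit a decomposition \[ A=\sum_{i=1}^t u^{(i)}u^{(i)\top} \] with $u^{(i)}\in\mathbb{F}_2^N$, such that its aggregate assignment is zero: \[ \sum_{i=1}^t u^{(i)}_U=0 \qquad\text{for every }U\in\mathcal{U}_{n,d}. \] Then \[ \operatorname{rank}(A) \ge \binom{d+1}{\lfloor (d+1)/2\rfloor} . \]
   Context: All objects are over $\mathbb{F}_2$. Fix integers $n\ge1$ and $d\ge1$, let $\mathcal{U}_{n,d}:=\{S\subseteq\{0,1,\dots,n\}:1\le|S|\le d\}$ and $N:=|\mathcal{U}_{n,d}|$. Let $\mathcal{Q}$ be a system of quadratic equations over $\mathbb{F}_2$ with zero constant term in the variables $\{y_S:S\in\mathcal{U}_{n,d}\}$, each of the form $\sum_{S,T\in\mathcal{U}_{n,d}} c_{S,T}y_Sy_T+\sum_{R\in\mathcal{U}_{n,d}} b_Ry_R=0$. Define $\mathcal{L}_d(\mathcal{Q})\subseteq\mathbb{F}_2^{N\times N}$ as the set of matrices $A$ with rows and columns indexed by $\mathcal{U}_{n,d}$ satisfying (1) the equal-union constraints $A_{S,T}=A_{S',T'}$ whenever $S\cup T=S'\cup T'$, and (2) for every equation of $\mathcal{Q}$, the linear constraint $\sum_{S,T} c_{S,T}A_{S,T}+\sum_R b_RA_{R,R}=0$. The vectors $u^{(i)}$ are viewed as assignments $y_U\mapsto u^{(i)}_U$; their aggregate assignment is the coordinate-wise sum $\sum_i u^{(i)}$. *)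

theory Defs
  imports Main "HOL.Vector_Spaces" "HOL-Library.Z2" "HOL-Library.Function_Algebras"
begin

definition U_nd :: "nat \<Rightarrow> nat \<Rightarrow> nat set set" where
  "U_nd n d = {S. S \<subseteq> {0..n} \<and> 1 \<le> card S \<and> card S \<le> d}"

text \<open>A quadratic equation with zero constant term: coefficients c_{S,T} and b_R.\<close>
type_synonym quad_eq = "(nat set \<Rightarrow> nat set \<Rightarrow> bit) \<times> (nat set \<Rightarrow> bit)"

text \<open>Matrices with rows/columns indexed by U_{n,d} are functions that vanish outside U_{n,d}.\<close>
definition is_Umat :: "nat \<Rightarrow> nat \<Rightarrow> (nat set \<Rightarrow> nat set \<Rightarrow> bit) \<Rightarrow> bool" where
  "is_Umat n d A \<longleftrightarrow> (\<forall>S T. (S \<notin> U_nd n d \<or> T \<notin> U_nd n d) \<longrightarrow> A S T = 0)"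

definition L_d :: "nat \<Rightarrow> nat \<Rightarrow> quad_eq set \<Rightarrow> (nat set \<Rightarrow> nat set \<Rightarrow> bit) set" where
  "L_d n d Q = {A. is_Umat n d A
     \<and> (\<forall>S\<in>U_nd n d. \<forall>T\<in>U_nd n d. \<forall>S'\<in>U_nd n d. \<forall>T'\<in>U_nd n d.
          S \<union> T = S' \<union> T' \<longrightarrow> A S T = A S' T')
     \<and> (\<forall>(c, b)\<in>Q. (\<Sum>S\<in>U_nd n d. \<Sum>T\<in>U_nd n d. c S T * A S T)
                    + (\<Sum>R\<in>U_nd n d. b R * A R R) = 0)}"

text \<open>Rank over F_2 of a U-indexed matrix: dimension of the span of its columns
  (column vectors as functions U_{n,d} -> F_2, vanishing outside).\<close>
definition rank_F2 :: "nat \<Rightarrow> nat \<Rightarrow> (nat set \<Rightarrow> nat set \<Rightarrow> bit) \<Rightarrow> nat" where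
  "rank_F2 n d A = vector_space.dim (\<lambda>(c::bit) (v::nat set \<Rightarrow> bit). (\<lambda>r. c * v r))
      ((\<lambda>T. (\<lambda>S. if S \<in> U_nd n d then A S T else 0)) ` U_nd n d)"

end

theory Submission
  imports Defs
begin

lemma sum_fun_apply_my: "(sum f B) x = (\<Sum>b\<in>B. f b x)" for f :: "'a \<Rightarrow> 'b \<Rightarrow> 'c::comm_monoid_add"
  by (induction B rule: infinite_finite_induct) auto

lemma vs_bit: "vector_space (\<lambda>(c::bit) (v::nat set \<Rightarrow> bit). (\<lambda>r. c * v r))"
  by unfold_locales (simp_all add: fun_eq_iff ring_distribs mult.assoc del: mult_bit_eq_and add_bit_eq_xor)

lemma central_step: "(x choose (x div 2)) \<le> (Suc x choose (Suc x div 2))"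
proof (cases "even x")
  case True
  then obtain k where x: "x = 2*k" by blast
  then have "Suc x div 2 = k" by simp
  show ?thesis
  proof (cases k)
    case 0 then show ?thesis using x by simp
  next
    case (Suc j)
    then show ?thesis using x \<open>Suc x div 2 = k\<close> by simp
  qed
next
  case False
  then obtain k where x: "x = 2*k+1" by (metis oddE)
  then have "Suc x div 2 = Suc k" "x div 2 = k" by simp_all
  then show ?thesis using x by simp
qed

lemma central_mono: "a \<le> b \<Longrightarrow> (a choose (a div 2)) \<le> (b choose (b div 2))"
proof (induction b rule: dec_induct)
  case base then show ?case by simp
next
  case (step b) then show ?case using central_step[of b] by linarith
qed

lemma bit_sq: "(x::bit) * x = x"
  by (cases x) simp_all

theorem lemma3p10:
  fixes n d t :: nat
    and Q :: "quad_eq set"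
    and A :: "nat set \<Rightarrow> nat set \<Rightarrow> bit"
    and u :: "nat \<Rightarrow> nat set \<Rightarrow> bit"
  assumes "n \<ge> 1" and "d \<ge> 1"
    and "finite Q"
    and "A \<in> L_d n d Q"
    and "A \<noteq> 0"
    and "\<forall>S\<in>U_nd n d. \<forall>T\<in>U_nd n d. A S T = (\<Sum>i\<in>{1..t}. u i S * u i T)"
    and "\<forall>U\<in>U_nd n d. (\<Sum>i\<in>{1..t}. u i U) = 0"
  shows "rank_F2 n d A \<ge> (d + 1) choose ((d + 1) div 2)"
proof -
  define U where "U = U_nd n d"
  have Uumat: "is_Umat n d A" using assms(4) unfolding L_d_def by blast
  have EU: "\<And>S T S' T'. S\<in>U \<Longrightarrow> T\<in>U \<Longrightarrow> S'\<in>U \<Longrightarrow> T'\<in>U \<Longrightarrow> S \<union> T = S' \<union> T' \<Longrightarrow> A S T = A S' T'"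
    using assms(4) unfolding L_d_def U_def by blast
  have inU: "X \<in> U \<longleftrightarrow> X \<subseteq> {0..n} \<and> 1 \<le> card X \<and> card X \<le> d" for X
    unfolding U_def U_nd_def by simp
  have diag: "A S S = 0" if "S \<in> U" for S
  proof -
    have "A S S = (\<Sum>i\<in>{1..t}. u i S * u i S)" using assms(6) that U_def by blast
    also have "\<dots> = (\<Sum>i\<in>{1..t}. u i S)" by (simp add: bit_sq)
    finally show ?thesis using assms(7) that U_def by simp
  qed
  obtain S0 T0 where "A S0 T0 \<noteq> 0" using assms(5) by (metis zero_fun_apply ext)
  then have S0T0: "S0 \<in> U" "T0 \<in> U" "A S0 T0 = 1"
  proof -
    have z: "A S0 T0 = 0" if "S0 \<notin> U_nd n d \<or> T0 \<notin> U_nd n d"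
      using Uumat that unfolding is_Umat_def by simp
    show "S0 \<in> U" using z \<open>A S0 T0 \<noteq> 0\<close> unfolding U_def by blast
    show "T0 \<in> U" using z \<open>A S0 T0 \<noteq> 0\<close> unfolding U_def by blast
    show "A S0 T0 = 1" using \<open>A S0 T0 \<noteq> 0\<close> by simp
  qed
  define P where "P W \<longleftrightarrow> (\<exists>S\<in>U. \<exists>T\<in>U. S \<union> T = W \<and> A S T = 1)" for W
  define m where "m = (LEAST m. \<exists>W. P W \<and> card W = m)"
  have "\<exists>W. P W \<and> card W = m" unfolding m_def
    by (rule LeastI_ex) (use S0T0 P_def in blast)
  then obtain W S1 T1 where W: "S1 \<in> U" "T1 \<in> U" "S1 \<union> T1 = W" "A S1 T1 = 1" "card W = m"
    unfolding P_def by blast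
  have minm: "P W' \<Longrightarrow> m \<le> card W'" for W' unfolding m_def by (rule Least_le) blast
  have Wsub: "W \<subseteq> {0..n}" using W inU by blast
  have finW: "finite W" using Wsub finite_subset by blast
  have key: "A S T = (if S \<union> T = W then 1 else 0)" if "S \<in> U" "T \<in> U" "S \<subseteq> W" "T \<subseteq> W" for S T
  proof (cases "S \<union> T = W")
    case True then show ?thesis using EU[OF that(1,2) W(1,2)] W by simp
  next
    case False
    then have "S \<union> T \<subset> W" using that by blast
    then have "card (S \<union> T) < m" using finW W(5) psubset_card_mono by blast
    then have "\<not> P (S \<union> T)" using minm by fastforce
    then have "A S T \<noteq> 1" using that P_def by blast
    then show ?thesis using False by simp
  qed
  have m1: "m \<ge> d + 1"
  proof (rule ccontr)
    assume "\<not> m \<ge> d + 1"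
    then have "card W \<le> d" using W by simp
    moreover have "card W \<ge> 1"
      using W inU card_mono[OF finW, of S1] by auto
    ultimately have "W \<in> U" using inU Wsub by blast
    then have "A W W = A S1 T1" using EU[OF \<open>W \<in> U\<close> \<open>W \<in> U\<close> W(1) W(2)] W(3) by simp
    then show False using diag[OF \<open>W \<in> U\<close>] W by simp
  qed
  have m2: "m \<le> 2 * d"
    using card_Un_le[of S1 T1] W inU by auto
  define k where "k = m div 2"
  define j where "j = m - k"
  have k1: "1 \<le> k" "k \<le> d" using m1 m2 assms(2) unfolding k_def by auto
  have j1: "1 \<le> j" "j \<le> d" using m1 m2 assms(2) unfolding j_def k_def by auto
  define Fam where "Fam = {T. T \<subseteq> W \<and> card T = j}"
  define col where "col T = (\<lambda>S. if S \<in> U then A S T else 0)" for T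
  have FamU: "T \<in> U" if "T \<in> Fam" for T using that j1 Wsub inU Fam_def by auto
  have FamU2: "W - T \<in> U" if "T \<in> Fam" for T
  proof -
    have "card (W - T) = k" using that Fam_def finW card_Diff_subset[of T W] j_def k_def W(5)
      by (simp add: finite_subset)
    then show ?thesis using k1 Wsub inU by auto
  qed
  have colval: "col T' (W - T) = (if T' = T then 1 else 0)" if "T \<in> Fam" "T' \<in> Fam" for T T'
  proof -
    have "col T' (W - T) = A (W - T) T'" using col_def FamU2[OF that(1)] by simp
    also have "\<dots> = (if (W - T) \<union> T' = W then 1 else 0)"
      using key[OF FamU2[OF that(1)] FamU[OF that(2)]] that Fam_def by auto
    also have "((W - T) \<union> T' = W) = (T' = T)"
    proof
      assume "(W - T) \<union> T' = W"
      then have "T \<subseteq> T'" using that Fam_def by auto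
      moreover have "finite T'" using that Fam_def finW finite_subset by auto
      moreover have "card T = card T'" using that Fam_def by simp
      ultimately show "T' = T" using card_subset_eq[of T' T] by simp
    next
      assume "T' = T" then show "(W - T) \<union> T' = W" using that Fam_def by auto
    qed
    finally show ?thesis .
  qed
  have injcol: "inj_on col Fam"
  proof (rule inj_onI)
    fix T T' assume a: "T \<in> Fam" "T' \<in> Fam" "col T = col T'"
    then have "col T' (W - T) = 1" using colval[OF a(1) a(1)] by simp
    then show "T = T'" using colval[OF a(1,2)] by (metis zero_neq_one)
  qed
  define B where "B = col ` Fam"
  have finFam: "finite Fam" using finW Fam_def by auto
  have cardB: "card B = m choose k"
  proof -
    have "card B = card Fam" using B_def card_image injcol by blast
    also have "\<dots> = m choose j" using n_subsets[OF finW] W(5) Fam_def by simp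
    also have "\<dots> = m choose k" using binomial_symmetric[of k m] j_def k_def by simp
    finally show ?thesis .
  qed
  interpret VS: vector_space "\<lambda>(c::bit) (v::nat set \<Rightarrow> bit). (\<lambda>r. c * v r)" by (rule vs_bit)
  have finB: "finite B" using B_def finFam by simp
  have coef0: "c v = 0" if s: "(\<Sum>v\<in>B. (\<lambda>r. c v * v r)) = 0" and v: "v \<in> B" for c v
  proof -
    obtain T where T: "T \<in> Fam" "v = col T" using B_def v by blast
    have "0 = (\<Sum>v\<in>B. (\<lambda>r. c v * v r)) (W - T)" using s by simp
    also have "\<dots> = (\<Sum>w\<in>B. c w * w (W - T))" by (simp add: sum_fun_apply_my)
    also have "\<dots> = (\<Sum>w\<in>B. if w = v then c w else 0)"
    proof (rule sum.cong)
      fix w assume "w \<in> B"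
      then obtain T' where T': "T' \<in> Fam" "w = col T'" using B_def by blast
      have wv: "(w = v) = (T' = T)"
      proof
        assume "w = v" then have "col T = col T'" using T T' by simp
        then show "T' = T" using inj_onD[OF injcol _ T(1) T'(1)] by simp
      next
        assume "T' = T" then show "w = v" using T T' by simp
      qed
      show "c w * w (W - T) = (if w = v then c w else 0)"
        using colval[OF T(1) T'(1)] T'(2) wv by simp
    qed simp
    also have "\<dots> = c v" using v finB by simp
    finally show "c v = 0" by simp
  qed
  have indep: "VS.independent B"
    unfolding VS.dependent_finite[OF finB] using coef0 by blast
  have Bsub: "B \<subseteq> (\<lambda>T. (\<lambda>S. if S \<in> U_nd n d then A S T else 0)) ` U_nd n d"
    using B_def col_def FamU U_def by auto
  have finV: "finite ((\<lambda>T. (\<lambda>S. if S \<in> U_nd n d then A S T else 0)) ` U_nd n d)"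
  proof -
    have "U_nd n d \<subseteq> Pow {0..n}" unfolding U_nd_def by auto
    then have "finite (U_nd n d)" using finite_subset by blast
    then show ?thesis by simp
  qed
  obtain C where C: "B \<subseteq> C" "C \<subseteq> (\<lambda>T. (\<lambda>S. if S \<in> U_nd n d then A S T else 0)) ` U_nd n d"
      "VS.independent C" "(\<lambda>T. (\<lambda>S. if S \<in> U_nd n d then A S T else 0)) ` U_nd n d \<subseteq> VS.span C"
    using VS.maximal_independent_subset_extend[OF Bsub indep] by blast
  have "card C = rank_F2 n d A"
    unfolding rank_F2_def using VS.basis_card_eq_dim[OF C(2) C(4) C(3)] .
  moreover have "card B \<le> card C" using C(1) C(2) finV by (meson card_mono finite_subset)
  ultimately have "card B \<le> rank_F2 n d A" by simp
  moreover have "(d + 1) choose ((d + 1) div 2) \<le> m choose k"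
    using central_mono[OF m1] k_def by simp
  ultimately show ?thesis using cardB by simp
qed

end
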